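(* Let $n\in\{3,4,5\}$ and let $\overline D_n:=\langle a,b\mid aba=bab,\ ab^2a=b^{n-2}\rangle$. Then $a^{2n}=\mathbf 1$ in $\overline D_n$. More precisely: for $n=3$, $a^3=(ab)^{-3}=(ab)^3$; for $n=4$, $a^4=a^{-4}$; for $n=5$, $a^5=(ba^{-1})^5$, $b^5=(ab^{-1})^5$ and $a^{10}=a^5b^5=\mathbf 1$. *)

theory Defs
  imports "HOL-Algebra.Group"
begin

end

theory Submission
  imports Defs
begin

fun wd :: "('g, 'm) monoid_scheme \<Rightarrow> 'g \<Rightarrow> 'g \<Rightarrow> char list \<Rightarrow> 'g" where
  "wd G x y [] = \<one>\<^bsub>G\<^esub>"
| "wd G x y (h # t) = (if h = CHR ''a'' then x else y) \<otimes>\<^bsub>G\<^esub> wd G x y t"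

declare wd.simps[simp del]

context group
begin

lemma wd_pow: "x \<in> carrier G \<Longrightarrow> y \<in> carrier G \<Longrightarrow> wd G x y (replicate k CHR ''a'') = x [^] k"
  by (induction k) (simp_all add: wd.simps, metis nat_pow_Suc nat_pow_Suc2)

lemma wd_powb: "h \<noteq> CHR ''a'' \<Longrightarrow> x \<in> carrier G \<Longrightarrow> y \<in> carrier G \<Longrightarrow> wd G x y (replicate k h) = y [^] k"
  by (induction k) (simp_all add: wd.simps, metis nat_pow_Suc nat_pow_Suc2)

lemma wd_closed: "x \<in> carrier G \<Longrightarrow> y \<in> carrier G \<Longrightarrow> wd G x y s \<in> carrier G"
  by (induction s) (auto simp: wd.simps)

lemma wd_append: "x \<in> carrier G \<Longrightarrow> y \<in> carrier G \<Longrightarrow> wd G x y (s @ t) = wd G x y s \<otimes> wd G x y t"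
  by (induction s) (auto simp: m_assoc wd_closed wd.simps)

lemma wd_step:
  assumes "wd G x y l = wd G x y r" "W = p @ l @ s" "W' = p @ r @ s"
    and "x \<in> carrier G" "y \<in> carrier G"
  shows "wd G x y W = wd G x y W'"
  using assms by (simp add: wd_append)

lemma wd_sub:
  assumes "a \<in> carrier G" "b \<in> carrier G"
  shows "wd G a (a \<otimes> b) s = wd G a b (concat (map (\<lambda>h. if h = CHR ''a'' then ''a'' else ''ab'') s))"
  using assms by (induction s) (auto simp: wd_append m_assoc wd.simps)

lemma conj_pow_gen:
  assumes "g \<in> carrier G" "y \<in> carrier G" "w \<in> carrier G" "g \<otimes> y = w \<otimes> g"
  shows "g \<otimes> y [^] (k::nat) = w [^] k \<otimes> g"
proof (induction k)
  case 0 then show ?case using assms by simp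
next
  case (Suc k)
  have "g \<otimes> y [^] Suc k = (g \<otimes> y [^] k) \<otimes> y" using assms by (simp add: m_assoc)
  also have "\<dots> = w [^] k \<otimes> (g \<otimes> y)" using Suc assms by (simp add: m_assoc)
  also have "\<dots> = w [^] Suc k \<otimes> g" using assms by (simp add: m_assoc)
  finally show ?case .
qed

end

context group
begin

lemma case3:
  assumes a: "a \<in> carrier G" and b: "b \<in> carrier G"
    and br: "a \<otimes> b \<otimes> a = b \<otimes> a \<otimes> b"
    and rl: "a \<otimes> b \<otimes> b \<otimes> a = b [^] (1::nat)"
  shows "a [^] (6::nat) = \<one> \<and> a [^] (3::nat) = inv ((a \<otimes> b) [^] (3::nat)) \<and> inv ((a \<otimes> b) [^] (3::nat)) = (a \<otimes> b) [^] (3::nat)"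
proof -
  have B: "wd G a b ''aba'' = wd G a b ''bab''" using br a b by (simp add: m_assoc wd.simps)
  have Rl: "wd G a b ''abba'' = wd G a b ''b''" using rl a b by (simp add: m_assoc numeral_eq_Suc wd.simps)
  have D: "wd G a b ''baababa'' = wd G a b ''aaba''"
  proof -
    have "wd G a b ''baababa'' = wd G a b ''bababba''" by (rule wd_step[OF B, where p="''ba''" and s="''ba''"]) (simp_all add: a b)
    also have "\<dots> = wd G a b ''abaabba''" by (rule wd_step[OF B[symmetric], where p="[]" and s="''abba''"]) (simp_all add: a b)
    also have "\<dots> = wd G a b ''abab''" by (rule wd_step[OF Rl, where p="''aba''" and s="[]"]) (simp_all add: a b)
    also have "\<dots> = wd G a b ''aaba''" by (rule wd_step[OF B[symmetric], where p="''a''" and s="[]"]) (simp_all add: a b)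
    finally show ?thesis .
  qed
  have E1: "wd G a b ''baababa'' = wd G a b ''baab'' \<otimes> wd G a b ''aba''" using wd_append[OF a b, of "''baab''" "''aba''"] by simp
  have E2: "wd G a b ''aaba'' = wd G a b ''a'' \<otimes> wd G a b ''aba''" using wd_append[OF a b, of "''a''" "''aba''"] by simp
  from D have "wd G a b ''baab'' \<otimes> wd G a b ''aba'' = wd G a b ''a'' \<otimes> wd G a b ''aba''" by (simp only: E1 E2)
  then have BAAB: "wd G a b ''baab'' = wd G a b ''a''" using a b by (simp add: wd_closed)
  define c where "c = a \<otimes> b"
  have cc: "c \<in> carrier G" using a b c_def by simp
  have "wd G a b ''aaba'' = wd G a b ''abab''" by (rule wd_step[OF B, where p="''a''" and s="[]"]) (simp_all add: a b)
  then have R1: "wd G a c ''aca'' = wd G a c ''cc''" by (simp add: c_def wd_sub[OF a b])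
  have "wd G a b ''abaab'' = wd G a b ''aa''" by (rule wd_step[OF BAAB, where p="''a''" and s="[]"]) (simp_all add: a b)
  then have R2: "wd G a c ''cac'' = wd G a c ''aa''" by (simp add: c_def wd_sub[OF a b])
  have K: "wd G a c ''aaaaaaaaaaaaac'' = wd G a c ''aaaaaaac''"
  proof -
    have "wd G a c ''aaaaaaaaaaaaac'' = wd G a c ''aaaaacacaaaaaac''" by (rule wd_step[OF R2[symmetric], where p="''aaaaa''" and s="''aaaaaac''"]) (simp_all add: a cc)
    also have "\<dots> = wd G a c ''aaaaacccaaaaac''" by (rule wd_step[OF R1, where p="''aaaaac''" and s="''aaaaac''"]) (simp_all add: a cc)
    also have "\<dots> = wd G a c ''aaaaacccacacaac''" by (rule wd_step[OF R2[symmetric], where p="''aaaaaccca''" and s="''aac''"]) (simp_all add: a cc)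
    also have "\<dots> = wd G a c ''aaaaacccacccac''" by (rule wd_step[OF R1, where p="''aaaaacccac''" and s="''ac''"]) (simp_all add: a cc)
    also have "\<dots> = wd G a c ''aaaaaccaaccac''" by (rule wd_step[OF R2, where p="''aaaaacc''" and s="''ccac''"]) (simp_all add: a cc)
    also have "\<dots> = wd G a c ''aaaaaccaacaa''" by (rule wd_step[OF R2, where p="''aaaaaccaac''" and s="[]"]) (simp_all add: a cc)
    also have "\<dots> = wd G a c ''aaaaaccacca''" by (rule wd_step[OF R1, where p="''aaaaacca''" and s="''a''"]) (simp_all add: a cc)
    also have "\<dots> = wd G a c ''aaaaacaaca''" by (rule wd_step[OF R2, where p="''aaaaac''" and s="''ca''"]) (simp_all add: a cc)
    also have "\<dots> = wd G a c ''aaaaacacc''" by (rule wd_step[OF R1, where p="''aaaaaca''" and s="[]"]) (simp_all add: a cc)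
    also have "\<dots> = wd G a c ''aaaaaaac''" by (rule wd_step[OF R2, where p="''aaaaa''" and s="''c''"]) (simp_all add: a cc)
    finally show ?thesis .
  qed
  have E3: "wd G a c ''aaaaaaaaaaaaac'' = wd G a c ''aaaaaa'' \<otimes> wd G a c ''aaaaaaac''" using wd_append[OF a cc, of "''aaaaaa''" "''aaaaaaac''"] by simp
  have P2N: "wd G a c ''aaaaaa'' = a [^] (6::nat)" using wd_pow[OF a cc, of 6] by (simp add: numeral_eq_Suc)
  have Z: "a [^] (6::nat) = \<one>" using K E3 P2N a cc by (simp add: wd_closed)
  have "wd G a c ''ccc'' = wd G a c ''aaa''"
  proof -
    have "wd G a c ''ccc'' = wd G a c ''acac''" by (rule wd_step[OF R1[symmetric], where p="[]" and s="''c''"]) (simp_all add: a cc)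
    also have "\<dots> = wd G a c ''aaa''" by (rule wd_step[OF R2, where p="''a''" and s="[]"]) (simp_all add: a cc)
    finally show ?thesis .
  qed
  have P3: "wd G a c ''aaa'' = a [^] (3::nat)" using wd_pow[OF a cc, of 3] by (simp add: numeral_eq_Suc)
  have P3c: "wd G a c ''ccc'' = c [^] (3::nat)" using wd_powb[where h="CHR ''c''", OF _ a cc, of 3] by (simp add: numeral_eq_Suc)
  then have C3: "c [^] (3::nat) = a [^] (3::nat)" using P3 `wd G a c ''ccc'' = wd G a c ''aaa''` by simp
  have "a [^] (3::nat) \<otimes> a [^] (3::nat) = \<one>" using Z a by (simp add: nat_pow_mult)
  then have I3: "inv (a [^] (3::nat)) = a [^] (3::nat)" using a by (simp add: inv_equality)
  show ?thesis using Z C3 I3 by (simp add: c_def)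
qed

lemma case4:
  assumes a: "a \<in> carrier G" and b: "b \<in> carrier G"
    and br: "a \<otimes> b \<otimes> a = b \<otimes> a \<otimes> b"
    and rl: "a \<otimes> b \<otimes> b \<otimes> a = b [^] (2::nat)"
  shows "a [^] (8::nat) = \<one> \<and> a [^] (4::nat) = inv (a [^] (4::nat))"
proof -
  have B: "wd G a b ''aba'' = wd G a b ''bab''" using br a b by (simp add: m_assoc wd.simps)
  have Rl: "wd G a b ''abba'' = wd G a b ''bb''" using rl a b by (simp add: m_assoc numeral_eq_Suc wd.simps)
  have D: "wd G a b ''baababa'' = wd G a b ''aaaba''"
  proof -
    have "wd G a b ''baababa'' = wd G a b ''bababba''" by (rule wd_step[OF B, where p="''ba''" and s="''ba''"]) (simp_all add: a b)
    also have "\<dots> = wd G a b ''abaabba''" by (rule wd_step[OF B[symmetric], where p="[]" and s="''abba''"]) (simp_all add: a b)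
    also have "\<dots> = wd G a b ''ababb''" by (rule wd_step[OF Rl, where p="''aba''" and s="[]"]) (simp_all add: a b)
    also have "\<dots> = wd G a b ''aabab''" by (rule wd_step[OF B[symmetric], where p="''a''" and s="''b''"]) (simp_all add: a b)
    also have "\<dots> = wd G a b ''aaaba''" by (rule wd_step[OF B[symmetric], where p="''aa''" and s="[]"]) (simp_all add: a b)
    finally show ?thesis .
  qed
  have E1: "wd G a b ''baababa'' = wd G a b ''baab'' \<otimes> wd G a b ''aba''" using wd_append[OF a b, of "''baab''" "''aba''"] by simp
  have E2: "wd G a b ''aaaba'' = wd G a b ''aa'' \<otimes> wd G a b ''aba''" using wd_append[OF a b, of "''aa''" "''aba''"] by simp
  from D have "wd G a b ''baab'' \<otimes> wd G a b ''aba'' = wd G a b ''aa'' \<otimes> wd G a b ''aba''" by (simp only: E1 E2)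
  then have BAAB: "wd G a b ''baab'' = wd G a b ''aa''" using a b by (simp add: wd_closed)
  define c where "c = a \<otimes> b"
  have cc: "c \<in> carrier G" using a b c_def by simp
  have "wd G a b ''aaba'' = wd G a b ''abab''" by (rule wd_step[OF B, where p="''a''" and s="[]"]) (simp_all add: a b)
  then have R1: "wd G a c ''aca'' = wd G a c ''cc''" by (simp add: c_def wd_sub[OF a b])
  have "wd G a b ''abaab'' = wd G a b ''aaa''" by (rule wd_step[OF BAAB, where p="''a''" and s="[]"]) (simp_all add: a b)
  then have R2: "wd G a c ''cac'' = wd G a c ''aaa''" by (simp add: c_def wd_sub[OF a b])
  have K: "wd G a c ''aaaaaaaacaaac'' = wd G a c ''caaac''"
  proof -
    have "wd G a c ''aaaaaaaacaaac'' = wd G a c ''aaaaaaaccaac''" by (rule wd_step[OF R1, where p="''aaaaaaa''" and s="''aac''"]) (simp_all add: a cc)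
    also have "\<dots> = wd G a c ''aacacaaccaac''" by (rule wd_step[OF R2[symmetric], where p="''aa''" and s="''aaccaac''"]) (simp_all add: a cc)
    also have "\<dots> = wd G a c ''aacccaccaac''" by (rule wd_step[OF R1, where p="''aac''" and s="''accaac''"]) (simp_all add: a cc)
    also have "\<dots> = wd G a c ''aaccaaacaac''" by (rule wd_step[OF R2, where p="''aacc''" and s="''caac''"]) (simp_all add: a cc)
    also have "\<dots> = wd G a c ''aaccaaccac''" by (rule wd_step[OF R1, where p="''aaccaa''" and s="''ac''"]) (simp_all add: a cc)
    also have "\<dots> = wd G a c ''aaccaacaaa''" by (rule wd_step[OF R2, where p="''aaccaac''" and s="[]"]) (simp_all add: a cc)
    also have "\<dots> = wd G a c ''aaccaccaa''" by (rule wd_step[OF R1, where p="''aacca''" and s="''aa''"]) (simp_all add: a cc)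
    also have "\<dots> = wd G a c ''aacaaacaa''" by (rule wd_step[OF R2, where p="''aac''" and s="''caa''"]) (simp_all add: a cc)
    also have "\<dots> = wd G a c ''accaacaa''" by (rule wd_step[OF R1, where p="''a''" and s="''aacaa''"]) (simp_all add: a cc)
    also have "\<dots> = wd G a c ''accacca''" by (rule wd_step[OF R1, where p="''acca''" and s="''a''"]) (simp_all add: a cc)
    also have "\<dots> = wd G a c ''acaaaca''" by (rule wd_step[OF R2, where p="''ac''" and s="''ca''"]) (simp_all add: a cc)
    also have "\<dots> = wd G a c ''ccaaca''" by (rule wd_step[OF R1, where p="[]" and s="''aaca''"]) (simp_all add: a cc)
    also have "\<dots> = wd G a c ''ccacc''" by (rule wd_step[OF R1, where p="''cca''" and s="[]"]) (simp_all add: a cc)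
    also have "\<dots> = wd G a c ''caaac''" by (rule wd_step[OF R2, where p="''c''" and s="''c''"]) (simp_all add: a cc)
    finally show ?thesis .
  qed
  have E3: "wd G a c ''aaaaaaaacaaac'' = wd G a c ''aaaaaaaa'' \<otimes> wd G a c ''caaac''" using wd_append[OF a cc, of "''aaaaaaaa''" "''caaac''"] by simp
  have P2N: "wd G a c ''aaaaaaaa'' = a [^] (8::nat)" using wd_pow[OF a cc, of 8] by (simp add: numeral_eq_Suc)
  have Z: "a [^] (8::nat) = \<one>" using K E3 P2N a cc by (simp add: wd_closed)
  have "a [^] (4::nat) \<otimes> a [^] (4::nat) = \<one>" using Z a by (simp add: nat_pow_mult)
  then have I4: "inv (a [^] (4::nat)) = a [^] (4::nat)" using a by (simp add: inv_equality)
  show ?thesis using Z I4 by simp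
qed

lemma case5:
  assumes a: "a \<in> carrier G" and b: "b \<in> carrier G"
    and br: "a \<otimes> b \<otimes> a = b \<otimes> a \<otimes> b"
    and rl: "a \<otimes> b \<otimes> b \<otimes> a = b [^] (3::nat)"
  shows "a [^] (10::nat) = \<one> \<and> a [^] (5::nat) = (b \<otimes> inv a) [^] (5::nat)
                   \<and> b [^] (5::nat) = (a \<otimes> inv b) [^] (5::nat)
                   \<and> a [^] (10::nat) = a [^] (5::nat) \<otimes> b [^] (5::nat)
                   \<and> a [^] (5::nat) \<otimes> b [^] (5::nat) = \<one>"
proof -
  have B: "wd G a b ''aba'' = wd G a b ''bab''" using br a b by (simp add: m_assoc wd.simps)
  have Rl: "wd G a b ''abba'' = wd G a b ''bbb''" using rl a b by (simp add: m_assoc numeral_eq_Suc wd.simps)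
  have D: "wd G a b ''baababa'' = wd G a b ''aaaaba''"
  proof -
    have "wd G a b ''baababa'' = wd G a b ''bababba''" by (rule wd_step[OF B, where p="''ba''" and s="''ba''"]) (simp_all add: a b)
    also have "\<dots> = wd G a b ''abaabba''" by (rule wd_step[OF B[symmetric], where p="[]" and s="''abba''"]) (simp_all add: a b)
    also have "\<dots> = wd G a b ''ababbb''" by (rule wd_step[OF Rl, where p="''aba''" and s="[]"]) (simp_all add: a b)
    also have "\<dots> = wd G a b ''aababb''" by (rule wd_step[OF B[symmetric], where p="''a''" and s="''bb''"]) (simp_all add: a b)
    also have "\<dots> = wd G a b ''aaabab''" by (rule wd_step[OF B[symmetric], where p="''aa''" and s="''b''"]) (simp_all add: a b)
    also have "\<dots> = wd G a b ''aaaaba''" by (rule wd_step[OF B[symmetric], where p="''aaa''" and s="[]"]) (simp_all add: a b)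
    finally show ?thesis .
  qed
  have E1: "wd G a b ''baababa'' = wd G a b ''baab'' \<otimes> wd G a b ''aba''" using wd_append[OF a b, of "''baab''" "''aba''"] by simp
  have E2: "wd G a b ''aaaaba'' = wd G a b ''aaa'' \<otimes> wd G a b ''aba''" using wd_append[OF a b, of "''aaa''" "''aba''"] by simp
  from D have "wd G a b ''baab'' \<otimes> wd G a b ''aba'' = wd G a b ''aaa'' \<otimes> wd G a b ''aba''" by (simp only: E1 E2)
  then have BAAB: "wd G a b ''baab'' = wd G a b ''aaa''" using a b by (simp add: wd_closed)
  define c where "c = a \<otimes> b"
  have cc: "c \<in> carrier G" using a b c_def by simp
  have "wd G a b ''aaba'' = wd G a b ''abab''" by (rule wd_step[OF B, where p="''a''" and s="[]"]) (simp_all add: a b)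
  then have R1: "wd G a c ''aca'' = wd G a c ''cc''" by (simp add: c_def wd_sub[OF a b])
  have "wd G a b ''abaab'' = wd G a b ''aaaa''" by (rule wd_step[OF BAAB, where p="''a''" and s="[]"]) (simp_all add: a b)
  then have R2: "wd G a c ''cac'' = wd G a c ''aaaa''" by (simp add: c_def wd_sub[OF a b])
  have K: "wd G a c ''aaaaaaaaaacaaccaacc'' = wd G a c ''caaccaacc''"
  proof -
    have "wd G a c ''aaaaaaaaaacaaccaacc'' = wd G a c ''aaaaaaaaaccaccaacc''" by (rule wd_step[OF R1, where p="''aaaaaaaaa''" and s="''accaacc''"]) (simp_all add: a cc)
    also have "\<dots> = wd G a c ''aaaaaaaaacaaaacaacc''" by (rule wd_step[OF R2, where p="''aaaaaaaaac''" and s="''caacc''"]) (simp_all add: a cc)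
    also have "\<dots> = wd G a c ''aaaaaaaaccaaacaacc''" by (rule wd_step[OF R1, where p="''aaaaaaaa''" and s="''aaacaacc''"]) (simp_all add: a cc)
    also have "\<dots> = wd G a c ''aaaaaaaaccaaccacc''" by (rule wd_step[OF R1, where p="''aaaaaaaaccaa''" and s="''acc''"]) (simp_all add: a cc)
    also have "\<dots> = wd G a c ''aaaaaaaaccaacaaaac''" by (rule wd_step[OF R2, where p="''aaaaaaaaccaac''" and s="''c''"]) (simp_all add: a cc)
    also have "\<dots> = wd G a c ''aaaaaaaaccaccaaac''" by (rule wd_step[OF R1, where p="''aaaaaaaacca''" and s="''aaac''"]) (simp_all add: a cc)
    also have "\<dots> = wd G a c ''aaaaaaaacaaaacaaac''" by (rule wd_step[OF R2, where p="''aaaaaaaac''" and s="''caaac''"]) (simp_all add: a cc)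
    also have "\<dots> = wd G a c ''aaaaaaaccaaacaaac''" by (rule wd_step[OF R1, where p="''aaaaaaa''" and s="''aaacaaac''"]) (simp_all add: a cc)
    also have "\<dots> = wd G a c ''aaaaaaaccaaccaac''" by (rule wd_step[OF R1, where p="''aaaaaaaccaa''" and s="''aac''"]) (simp_all add: a cc)
    also have "\<dots> = wd G a c ''acacaaccaaccaac''" by (rule wd_step[OF R2[symmetric], where p="''a''" and s="''aaccaaccaac''"]) (simp_all add: a cc)
    also have "\<dots> = wd G a c ''acccaccaaccaac''" by (rule wd_step[OF R1, where p="''ac''" and s="''accaaccaac''"]) (simp_all add: a cc)
    also have "\<dots> = wd G a c ''accaaaacaaccaac''" by (rule wd_step[OF R2, where p="''acc''" and s="''caaccaac''"]) (simp_all add: a cc)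
    also have "\<dots> = wd G a c ''accaaaccaccaac''" by (rule wd_step[OF R1, where p="''accaaa''" and s="''accaac''"]) (simp_all add: a cc)
    also have "\<dots> = wd G a c ''accaaacaaaacaac''" by (rule wd_step[OF R2, where p="''accaaac''" and s="''caac''"]) (simp_all add: a cc)
    also have "\<dots> = wd G a c ''accaaccaaacaac''" by (rule wd_step[OF R1, where p="''accaa''" and s="''aaacaac''"]) (simp_all add: a cc)
    also have "\<dots> = wd G a c ''accaaccaaccac''" by (rule wd_step[OF R1, where p="''accaaccaa''" and s="''ac''"]) (simp_all add: a cc)
    also have "\<dots> = wd G a c ''accaaccaacaaaa''" by (rule wd_step[OF R2, where p="''accaaccaac''" and s="[]"]) (simp_all add: a cc)
    also have "\<dots> = wd G a c ''accaaccaccaaa''" by (rule wd_step[OF R1, where p="''accaacca''" and s="''aaa''"]) (simp_all add: a cc)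
    also have "\<dots> = wd G a c ''accaacaaaacaaa''" by (rule wd_step[OF R2, where p="''accaac''" and s="''caaa''"]) (simp_all add: a cc)
    also have "\<dots> = wd G a c ''accaccaaacaaa''" by (rule wd_step[OF R1, where p="''acca''" and s="''aaacaaa''"]) (simp_all add: a cc)
    also have "\<dots> = wd G a c ''accaccaaccaa''" by (rule wd_step[OF R1, where p="''accaccaa''" and s="''aa''"]) (simp_all add: a cc)
    also have "\<dots> = wd G a c ''acaaaacaaccaa''" by (rule wd_step[OF R2, where p="''ac''" and s="''caaccaa''"]) (simp_all add: a cc)
    also have "\<dots> = wd G a c ''ccaaacaaccaa''" by (rule wd_step[OF R1, where p="[]" and s="''aaacaaccaa''"]) (simp_all add: a cc)
    also have "\<dots> = wd G a c ''ccaaccaccaa''" by (rule wd_step[OF R1, where p="''ccaa''" and s="''accaa''"]) (simp_all add: a cc)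
    also have "\<dots> = wd G a c ''ccaacaaaacaa''" by (rule wd_step[OF R2, where p="''ccaac''" and s="''caa''"]) (simp_all add: a cc)
    also have "\<dots> = wd G a c ''ccaccaaacaa''" by (rule wd_step[OF R1, where p="''cca''" and s="''aaacaa''"]) (simp_all add: a cc)
    also have "\<dots> = wd G a c ''ccaccaacca''" by (rule wd_step[OF R1, where p="''ccaccaa''" and s="''a''"]) (simp_all add: a cc)
    also have "\<dots> = wd G a c ''caaaacaacca''" by (rule wd_step[OF R2, where p="''c''" and s="''caacca''"]) (simp_all add: a cc)
    also have "\<dots> = wd G a c ''caaaccacca''" by (rule wd_step[OF R1, where p="''caaa''" and s="''acca''"]) (simp_all add: a cc)
    also have "\<dots> = wd G a c ''caaacaaaaca''" by (rule wd_step[OF R2, where p="''caaac''" and s="''ca''"]) (simp_all add: a cc)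
    also have "\<dots> = wd G a c ''caaccaaaca''" by (rule wd_step[OF R1, where p="''caa''" and s="''aaaca''"]) (simp_all add: a cc)
    also have "\<dots> = wd G a c ''caaccaacc''" by (rule wd_step[OF R1, where p="''caaccaa''" and s="[]"]) (simp_all add: a cc)
    finally show ?thesis .
  qed
  have E3: "wd G a c ''aaaaaaaaaacaaccaacc'' = wd G a c ''aaaaaaaaaa'' \<otimes> wd G a c ''caaccaacc''" using wd_append[OF a cc, of "''aaaaaaaaaa''" "''caaccaacc''"] by simp
  have P2N: "wd G a c ''aaaaaaaaaa'' = a [^] (10::nat)" using wd_pow[OF a cc, of 10] by (simp add: numeral_eq_Suc)
  have Z: "a [^] (10::nat) = \<one>" using K E3 P2N a cc by (simp add: wd_closed)
  have D5: "wd G a b ''ababbbbb'' = wd G a b ''aaaaaaba''"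
  proof -
    have "wd G a b ''ababbbbb'' = wd G a b ''aababbbb''" by (rule wd_step[OF B[symmetric], where p="''a''" and s="''bbbb''"]) (simp_all add: a b)
    also have "\<dots> = wd G a b ''aaababbb''" by (rule wd_step[OF B[symmetric], where p="''aa''" and s="''bbb''"]) (simp_all add: a b)
    also have "\<dots> = wd G a b ''aaaababb''" by (rule wd_step[OF B[symmetric], where p="''aaa''" and s="''bb''"]) (simp_all add: a b)
    also have "\<dots> = wd G a b ''aaaaabab''" by (rule wd_step[OF B[symmetric], where p="''aaaa''" and s="''b''"]) (simp_all add: a b)
    also have "\<dots> = wd G a b ''aaaaaaba''" by (rule wd_step[OF B[symmetric], where p="''aaaaa''" and s="[]"]) (simp_all add: a b)
    finally show ?thesis .
  qed
  have "wd G a c ''aaaaaca'' = wd G a c ''caaaaaa''"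
  proof -
    have "wd G a c ''aaaaaca'' = wd G a c ''cacaca''" by (rule wd_step[OF R2[symmetric], where p="[]" and s="''aca''"]) (simp_all add: a cc)
    also have "\<dots> = wd G a c ''caaaaaa''" by (rule wd_step[OF R2, where p="''ca''" and s="''a''"]) (simp_all add: a cc)
    finally show ?thesis .
  qed
  then have "wd G a b ''aaaaaaba'' = wd G a b ''abaaaaaa''" by (simp add: c_def wd_sub[OF a b])
  with D5 have "wd G a b ''ababbbbb'' = wd G a b ''abaaaaaa''" by simp
  have E4: "wd G a b ''ababbbbb'' = wd G a b ''aba'' \<otimes> wd G a b ''bbbbb''" using wd_append[OF a b, of "''aba''" "''bbbbb''"] by simp
  have E5: "wd G a b ''abaaaaaa'' = wd G a b ''aba'' \<otimes> wd G a b ''aaaaa''" using wd_append[OF a b, of "''aba''" "''aaaaa''"] by simp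
  from `wd G a b ''ababbbbb'' = wd G a b ''abaaaaaa''` have "wd G a b ''aba'' \<otimes> wd G a b ''bbbbb'' = wd G a b ''aba'' \<otimes> wd G a b ''aaaaa''" by (simp only: E4 E5)
  then have "wd G a b ''bbbbb'' = wd G a b ''aaaaa''" using a b by (simp add: wd_closed)
  have P5b: "wd G a b ''aaaaa'' = a [^] (5::nat)" using wd_pow[OF a b, of 5] by (simp add: numeral_eq_Suc)
  have Q5b: "wd G a b ''bbbbb'' = b [^] (5::nat)" using wd_powb[where h="CHR ''b''", OF _ a b, of 5] by (simp add: numeral_eq_Suc)
  have B5: "b [^] (5::nat) = a [^] (5::nat)" using P5b Q5b `wd G a b ''bbbbb'' = wd G a b ''aaaaa''` by simp
  define y where "y = wd G a c ''aaaacaaaa''"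
  have yc: "y \<in> carrier G" using y_def a cc by (simp add: wd_closed)
  have Y1: "wd G a c ''aaaaacaaaaa'' = wd G a c ''caaaaaaaaaa''"
  proof -
    have "wd G a c ''aaaaacaaaaa'' = wd G a c ''cacacaaaaa''" by (rule wd_step[OF R2[symmetric], where p="[]" and s="''acaaaaa''"]) (simp_all add: a cc)
    also have "\<dots> = wd G a c ''caaaaaaaaaa''" by (rule wd_step[OF R2, where p="''ca''" and s="''aaaaa''"]) (simp_all add: a cc)
    finally show ?thesis .
  qed
  have P10: "wd G a c ''aaaaaaaaaa'' = a [^] (10::nat)" using wd_pow[OF a cc, of 10] by (simp add: numeral_eq_Suc)
  have "wd G a c ''aaaaacaaaaa'' = a \<otimes> y \<otimes> a" using wd_append[OF a cc, of "''a''" "''aaaacaaaaa''"] wd_append[OF a cc, of "''aaaacaaaa''" "''a''"] a cc by (simp add: y_def m_assoc wd.simps wd_closed)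
  moreover have "wd G a c ''caaaaaaaaaa'' = c" using wd_append[OF a cc, of "''c''" "''aaaaaaaaaa''"] P10 Z a cc by (simp add: wd.simps)
  ultimately have "a \<otimes> (y \<otimes> a) = a \<otimes> b" using Y1 a yc by (simp add: c_def m_assoc)
  then have "y \<otimes> a = b" using a b yc by simp
  then have BY: "b \<otimes> inv a = y" using a b yc by (metis inv_solve_right)
  define g where "g = wd G a c ''caaa''"
  have gc: "g \<in> carrier G" using g_def a cc by (simp add: wd_closed)
  have G1: "wd G a c ''caaaaaaacaaaa'' = wd G a c ''aaaaaaaaacaaa''"
  proof -
    have "wd G a c ''caaaaaaacaaaa'' = wd G a c ''caaaaaaccaaa''" by (rule wd_step[OF R1, where p="''caaaaaa''" and s="''aaa''"]) (simp_all add: a cc)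
    also have "\<dots> = wd G a c ''cacacaccaaa''" by (rule wd_step[OF R2[symmetric], where p="''ca''" and s="''accaaa''"]) (simp_all add: a cc)
    also have "\<dots> = wd G a c ''aaaaacaccaaa''" by (rule wd_step[OF R2, where p="[]" and s="''acaccaaa''"]) (simp_all add: a cc)
    also have "\<dots> = wd G a c ''aaaaaaaaacaaa''" by (rule wd_step[OF R2, where p="''aaaaa''" and s="''caaa''"]) (simp_all add: a cc)
    finally show ?thesis .
  qed
  have E6: "wd G a c ''caaaaaaacaaaa'' = wd G a c ''caaa'' \<otimes> wd G a c ''aaaacaaaa''" using wd_append[OF a cc, of "''caaa''" "''aaaacaaaa''"] by simp
  have E7: "wd G a c ''aaaaaaaaacaaa'' = wd G a c ''aaaaaaaaa'' \<otimes> wd G a c ''caaa''" using wd_append[OF a cc, of "''aaaaaaaaa''" "''caaa''"] by simp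
  have P9: "wd G a c ''aaaaaaaaa'' = a [^] (9::nat)" using wd_pow[OF a cc, of 9] by (simp add: numeral_eq_Suc)
  have "g \<otimes> y = a [^] (9::nat) \<otimes> g" using G1 E6 E7 P9 by (simp add: g_def y_def)
  then have GY: "g \<otimes> y [^] (5::nat) = (a [^] (9::nat)) [^] (5::nat) \<otimes> g" using conj_pow_gen[OF gc yc, of "a [^] (9::nat)"] a by simp
  have A95: "(a [^] (9::nat)) [^] (5::nat) = a [^] (5::nat)"
  proof -
    have "(a [^] (9::nat)) [^] (5::nat) = a [^] (10 * 4 + 5::nat)" using a by (simp add: nat_pow_pow)
    also have "\<dots> = (a [^] (10::nat)) [^] (4::nat) \<otimes> a [^] (5::nat)" using a by (simp add: nat_pow_pow nat_pow_mult)
    finally show ?thesis using Z a by simp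
  qed
  have G2: "wd G a c ''caaaaaaaa'' = wd G a c ''aaaaacaaa''"
  proof -
    have "wd G a c ''caaaaaaaa'' = wd G a c ''cacacaaa''" by (rule wd_step[OF R2[symmetric], where p="''ca''" and s="''aaa''"]) (simp_all add: a cc)
    also have "\<dots> = wd G a c ''aaaaacaaa''" by (rule wd_step[OF R2, where p="[]" and s="''acaaa''"]) (simp_all add: a cc)
    finally show ?thesis .
  qed
  have E8: "wd G a c ''caaaaaaaa'' = wd G a c ''caaa'' \<otimes> wd G a c ''aaaaa''" using wd_append[OF a cc, of "''caaa''" "''aaaaa''"] by simp
  have E9: "wd G a c ''aaaaacaaa'' = wd G a c ''aaaaa'' \<otimes> wd G a c ''caaa''" using wd_append[OF a cc, of "''aaaaa''" "''caaa''"] by simp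
  have P5: "wd G a c ''aaaaa'' = a [^] (5::nat)" using wd_pow[OF a cc, of 5] by (simp add: numeral_eq_Suc)
  have GA: "g \<otimes> a [^] (5::nat) = a [^] (5::nat) \<otimes> g" using G2 E8 E9 P5 by (simp add: g_def)
  from GY have "g \<otimes> y [^] (5::nat) = g \<otimes> a [^] (5::nat)" by (simp only: A95 GA)
  then have Y5: "y [^] (5::nat) = a [^] (5::nat)" using gc yc a by simp
  have A55: "a [^] (5::nat) \<otimes> a [^] (5::nat) = \<one>" using Z a by (simp add: nat_pow_mult)
  then have I5: "inv (a [^] (5::nat)) = a [^] (5::nat)" using a by (simp add: inv_equality)
  have "a \<otimes> inv b = inv (b \<otimes> inv a)" using a b by (simp add: inv_mult_group)
  then have "(a \<otimes> inv b) [^] (5::nat) = inv (y [^] (5::nat))" using BY yc by (simp add: nat_pow_inv)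
  then have AB: "(a \<otimes> inv b) [^] (5::nat) = b [^] (5::nat)" using Y5 I5 B5 by simp
  show ?thesis using Z BY Y5 AB B5 A55 by simp
qed

end

theorem mainTheorem6:
  fixes G (structure) and a b :: 'g and n :: nat
  assumes "group G"
    and "a \<in> carrier G" and "b \<in> carrier G"
    and "n \<in> {3, 4, 5}"
    and "a \<otimes> b \<otimes> a = b \<otimes> a \<otimes> b"
    and "a \<otimes> b \<otimes> b \<otimes> a = b [^] (n - 2)"
  shows "a [^] (2 * n) = \<one>
    \<and> (n = 3 \<longrightarrow> a [^] (3::nat) = inv ((a \<otimes> b) [^] (3::nat))
                   \<and> inv ((a \<otimes> b) [^] (3::nat)) = (a \<otimes> b) [^] (3::nat))
    \<and> (n = 4 \<longrightarrow> a [^] (4::nat) = inv (a [^] (4::nat)))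
    \<and> (n = 5 \<longrightarrow> a [^] (5::nat) = (b \<otimes> inv a) [^] (5::nat)
                   \<and> b [^] (5::nat) = (a \<otimes> inv b) [^] (5::nat)
                   \<and> a [^] (10::nat) = a [^] (5::nat) \<otimes> b [^] (5::nat)
                   \<and> a [^] (5::nat) \<otimes> b [^] (5::nat) = \<one>)"
proof -
  interpret group G by fact
  from assms(4) consider "n = 3" | "n = 4" | "n = 5" by auto
  then show ?thesis
  proof cases
    case 1
    have rl: "a \<otimes> b \<otimes> b \<otimes> a = b [^] (1::nat)" using assms(6) 1 by simp
    have H: "a [^] (6::nat) = \<one>" "(n = 3 \<longrightarrow> a [^] (3::nat) = inv ((a \<otimes> b) [^] (3::nat)) \<and> inv ((a \<otimes> b) [^] (3::nat)) = (a \<otimes> b) [^] (3::nat))"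
      "(n = 4 \<longrightarrow> a [^] (4::nat) = inv (a [^] (4::nat)))"
      "(n = 5 \<longrightarrow> a [^] (5::nat) = (b \<otimes> inv a) [^] (5::nat) \<and> b [^] (5::nat) = (a \<otimes> inv b) [^] (5::nat) \<and> a [^] (10::nat) = a [^] (5::nat) \<otimes> b [^] (5::nat) \<and> a [^] (5::nat) \<otimes> b [^] (5::nat) = \<one>)"
      using case3[OF assms(2,3,5) rl] 1 by auto
    have "2 * n = 6" using 1 by simp
    then show ?thesis using H by metis
  next
    case 2
    have rl: "a \<otimes> b \<otimes> b \<otimes> a = b [^] (2::nat)" using assms(6) 2 by simp
    have H: "a [^] (8::nat) = \<one>" "(n = 3 \<longrightarrow> a [^] (3::nat) = inv ((a \<otimes> b) [^] (3::nat)) \<and> inv ((a \<otimes> b) [^] (3::nat)) = (a \<otimes> b) [^] (3::nat))"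
      "(n = 4 \<longrightarrow> a [^] (4::nat) = inv (a [^] (4::nat)))"
      "(n = 5 \<longrightarrow> a [^] (5::nat) = (b \<otimes> inv a) [^] (5::nat) \<and> b [^] (5::nat) = (a \<otimes> inv b) [^] (5::nat) \<and> a [^] (10::nat) = a [^] (5::nat) \<otimes> b [^] (5::nat) \<and> a [^] (5::nat) \<otimes> b [^] (5::nat) = \<one>)"
      using case4[OF assms(2,3,5) rl] 2 by auto
    have "2 * n = 8" using 2 by simp
    then show ?thesis using H by metis
  next
    case 3
    have rl: "a \<otimes> b \<otimes> b \<otimes> a = b [^] (3::nat)" using assms(6) 3 by simp
    have H: "a [^] (10::nat) = \<one>" "(n = 3 \<longrightarrow> a [^] (3::nat) = inv ((a \<otimes> b) [^] (3::nat)) \<and> inv ((a \<otimes> b) [^] (3::nat)) = (a \<otimes> b) [^] (3::nat))"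
      "(n = 4 \<longrightarrow> a [^] (4::nat) = inv (a [^] (4::nat)))"
      "(n = 5 \<longrightarrow> a [^] (5::nat) = (b \<otimes> inv a) [^] (5::nat) \<and> b [^] (5::nat) = (a \<otimes> inv b) [^] (5::nat) \<and> a [^] (10::nat) = a [^] (5::nat) \<otimes> b [^] (5::nat) \<and> a [^] (5::nat) \<otimes> b [^] (5::nat) = \<one>)"
      using case5[OF assms(2,3,5) rl] 3 by auto
    have "2 * n = 10" using 3 by simp
    then show ?thesis using H by metis
  qed
qed

end
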